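(* Let $\mathfrak{g}:\mathbb{R}^{D_{\alpha}}\to\mathbb{R}^{D}$ be a $C^{2}$ function with $\mathfrak{g}(c)=\mathfrak{g}_{0}+Ac+\mathfrak{h}(c)$, where $\mathfrak{g}_{0}\in\mathbb{R}^{D}$, $A$ is a $D\times D_{\alpha}$ matrix, and $\mathfrak{g},\mathfrak{h}$ are defined for $\|c\|\leq a$ with $\|\mathfrak{h}(c)\|\leq L\|c\|^{2}$ there ($L>0$). Suppose the $\mathfrak{r}$ largest singular values of $A$ are all $\geq\sigma>0$. Then for every $\epsilon$ with $0<\epsilon^{1/2}\leq a$, the probability of the set $\{c:\|\mathfrak{g}(c)\|\leq L\epsilon\}$ relative to the ball $\{c:\|c\|\leq\epsilon^{1/2}\}$ is at most $$D_{\alpha}!\,2^{\mathfrak{r}}L^{\mathfrak{r}}\epsilon^{\mathfrak{r}/2}/\sigma^{\mathfrak{r}}.$$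
   Context: All norms are Euclidean. For measurable sets $B_{1},B_{2}$, the probability of $B_{1}$ relative to $B_{2}$ is $\mu(B_{1}\cap B_{2})/\mu(B_{2})$, where $\mu$ is Lebesgue measure on $\mathbb{R}^{D_{\alpha}}$. *)

theory Defs
  imports "HOL-Analysis.Analysis"
begin

text \<open>Singular values of a matrix A (rows indexed by 'b, columns by 'a): the square roots
of the eigenvalues of A^T A, each repeated according to its multiplicity (the dimension
of its eigenspace; A^T A is symmetric), listed in non-increasing order.\<close>

definition singular_values :: "real^'a^'b \<Rightarrow> real list" where
  "singular_values A =
     (let M = transpose A ** A in
      rev (sort (concat (map (\<lambda>e. replicate (dim {v. M *v v = e *\<^sub>R v}) (sqrt e))
        (sorted_list_of_set {e. \<exists>v. v \<noteq> 0 \<and> M *v v = e *\<^sub>R v})))))"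

definition largest_singular_values_ge :: "nat \<Rightarrow> real \<Rightarrow> real^'a^'b \<Rightarrow> bool" where
  "largest_singular_values_ge r s A \<longleftrightarrow>
     r \<le> length (singular_values A) \<and> (\<forall>i<r. singular_values A ! i \<ge> s)"

end

theory Submission
  imports Defs
begin


typedef 'a wo = "UNIV :: 'a set" by auto

definition wo_enc :: "'a wo \<Rightarrow> nat" where
  "wo_enc = (SOME f. inj f)"

lemma wo_enc_inj: "inj (wo_enc :: ('a::finite) wo \<Rightarrow> nat)"
proof -
  have fin: "finite (UNIV :: 'a wo set)"
  proof -
    have "(UNIV :: 'a wo set) = Abs_wo ` UNIV"
      by (metis Abs_wo_cases UNIV_I imageI subsetI subset_antisym)
    then show ?thesis by (metis finite_imageI finite_class.finite_UNIV)
  qed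
  have "\<exists>f::'a wo \<Rightarrow> nat. inj f"
    using finite_imp_inj_to_nat_seg[OF fin] by blast
  then show ?thesis unfolding wo_enc_def by (rule someI_ex)
qed

instantiation wo :: (finite) finite
begin
instance
proof
  have "(UNIV :: 'a wo set) = Abs_wo ` UNIV"
    by (metis Abs_wo_cases UNIV_I imageI subsetI subset_antisym)
  then show "finite (UNIV :: 'a wo set)" by (metis finite_imageI finite_class.finite_UNIV)
qed
end


instantiation wo :: (finite) linorder
begin
definition less_eq_wo :: "'a wo \<Rightarrow> 'a wo \<Rightarrow> bool" where
  "less_eq_wo x y \<longleftrightarrow> wo_enc x \<le> wo_enc y"
definition less_wo :: "'a wo \<Rightarrow> 'a wo \<Rightarrow> bool" where
  "less_wo x y \<longleftrightarrow> wo_enc x < wo_enc y"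
instance
  by standard (auto simp: less_eq_wo_def less_wo_def dest: injD[OF wo_enc_inj])
end


instance wo :: (finite) wellorder
proof
  fix P :: "'a wo \<Rightarrow> bool" and a :: "'a wo"
  assume step: "\<And>x. (\<And>y. y < x \<Longrightarrow> P y) \<Longrightarrow> P x"
  have "\<forall>x. wo_enc x = n \<longrightarrow> P x" for n
  proof (induction n rule: less_induct)
    case (less n)
    then show ?case using step by (auto simp: less_wo_def)
  qed
  then show "P a" by blast
qed

lemma prod_Basis_cart:
  fixes f :: "real^'n \<Rightarrow> real"
  shows "(\<Prod>b\<in>Basis. f b) = (\<Prod>i\<in>UNIV. f (axis i 1))"
proof -
  have eq: "Basis = range (\<lambda>i::'n. axis i (1::real))"
    by (auto simp: Basis_vec_def)
  have inj: "inj (\<lambda>i::'n. axis i (1::real))"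
    by (auto simp: inj_def axis_eq_axis)
  have "(\<Prod>b\<in>Basis. f b) = (\<Prod>b\<in>range (\<lambda>i::'n. axis i (1::real)). f b)"
    by (simp only: eq)
  also have "\<dots> = (\<Prod>i\<in>UNIV. f (axis i 1))"
    using prod.reindex[OF inj, of f] by (simp add: o_def)
  finally show ?thesis .
qed

lemma relabel_lborel:
  fixes h :: "'c::finite \<Rightarrow> 'a::finite"
  assumes bh: "bij h"
  shows "distr lborel borel (\<lambda>v::real^'a. (\<chi> j::'c. v $ h j)) = (lborel :: (real^'c) measure)"
proof -
  define R where "R = (\<lambda>v::real^'a. (\<chi> j::'c. v $ h j))"
  have linR: "linear R"
    unfolding R_def by (rule linearI) (simp_all add: vec_eq_iff)
  then have Rmeas: "R \<in> borel_measurable borel"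
    by (intro borel_measurable_continuous_onI linear_continuous_on linear_conv_bounded_linear[THEN iffD1])
  have hinv: "h (inv h i) = i" for i using bh by (simp add: bij_is_surj surj_f_inv_f)
  have invh: "inv h (h j) = j" for j using bh by (simp add: bij_is_inj)
  show ?thesis
    unfolding R_def[symmetric]
  proof (rule lborel_eqI[symmetric])
    show "sets (distr lborel borel R) = sets borel" by simp
    fix l u :: "real^'c"
    assume le: "\<And>b. b \<in> Basis \<Longrightarrow> l \<bullet> b \<le> u \<bullet> b"
    then have le': "l $ j \<le> u $ j" for j
      using le[of "axis j 1"] by (auto simp: Basis_vec_def inner_axis)
    define l' where "l' = (\<chi> i. l $ inv h i)"
    define u' where "u' = (\<chi> i. u $ inv h i)"
    have pre: "R -` box l u = box l' u'"
    proof (auto simp: mem_box_cart R_def l'_def u'_def)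
      fix x :: "real^'a" and i
      assume "\<forall>j. l $ j < x $ h j \<and> x $ h j < u $ j"
      then show "l $ inv h i < x $ i" "x $ i < u $ inv h i"
        using hinv[of i] by metis+
    next
      fix x :: "real^'a" and j
      assume "\<forall>i. l $ inv h i < x $ i \<and> x $ i < u $ inv h i"
      then show "l $ j < x $ h j" "x $ h j < u $ j"
        using invh[of j] by metis+
    qed
    have "emeasure (distr lborel borel R) (box l u) = emeasure lborel (R -` box l u)"
      by (simp add: emeasure_distr Rmeas)
    also have "\<dots> = emeasure lborel (box l' u')" by (simp add: pre)
    also have "\<dots> = (\<Prod>b\<in>Basis. (u' - l') \<bullet> b)"
      by (rule emeasure_lborel_box)
        (auto simp: Basis_vec_def inner_axis l'_def u'_def le')
    also have "\<dots> = (\<Prod>i\<in>UNIV. u $ inv h i - l $ inv h i)"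
      by (simp add: prod_Basis_cart inner_axis l'_def u'_def)
    also have "\<dots> = (\<Prod>j\<in>UNIV. u $ j - l $ j)"
      using prod.reindex_bij_betw[of "inv h" UNIV UNIV "\<lambda>j. u $ j - l $ j"] bh
      by (simp add: bij_betw_inv_into bij_imp_bij_inv)
    also have "\<dots> = (\<Prod>b\<in>Basis. (u - l) \<bullet> b)"
      by (simp add: prod_Basis_cart inner_axis)
    finally show "emeasure (distr lborel borel R) (box l u) = (\<Prod>b\<in>Basis. (u - l) \<bullet> b)"
      by simp
  qed
qed


lemma orth_image_cbox_measure:
  fixes g :: "real^'a::finite \<Rightarrow> real^'a"
  assumes og: "orthogonal_transformation g"
  shows "measure lebesgue (g ` cbox a b) = measure lebesgue (cbox a b)"
proof -
  define R where "R = (\<lambda>v::real^'a. (\<chi> j::'a wo. v $ Rep_wo j))"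
  define Ri where "Ri = (\<lambda>w::real^'a wo. (\<chi> i::'a. w $ Abs_wo i))"
  have RRi: "R (Ri w) = w" for w by (simp add: R_def Ri_def vec_eq_iff Rep_wo_inverse)
  have RiR: "Ri (R v) = v" for v by (simp add: R_def Ri_def vec_eq_iff Abs_wo_inverse)
  have bR: "bij (Rep_wo :: 'a wo \<Rightarrow> 'a)"
    by (metis Abs_wo_inverse Rep_wo_inverse UNIV_I bij_betwI')
  have linR: "linear R" unfolding R_def by (rule linearI) (simp_all add: vec_eq_iff)
  have linRi: "linear Ri" unfolding Ri_def by (rule linearI) (simp_all add: vec_eq_iff)
  have Rmeas: "R \<in> borel_measurable borel"
    using linR by (intro borel_measurable_continuous_onI linear_continuous_on linear_conv_bounded_linear[THEN iffD1])
  have distrR: "distr lborel borel R = (lborel :: (real^'a wo) measure)"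
    unfolding R_def by (rule relabel_lborel[OF bR])
  have key: "measure lebesgue (Ri ` K) = measure lebesgue K" if K: "K \<in> sets borel" for K
  proof -
    have eq: "Ri ` K = R -` K"
      by (auto simp: RRi RiR) (metis RiR image_eqI)
    have pm: "R -` K \<in> sets borel" using Rmeas K by (simp add: measurable_sets_borel)
    have "measure lebesgue (Ri ` K) = measure lborel (R -` K)"
      using pm by (simp add: eq)
    also have "\<dots> = measure (distr lborel borel R) K"
      using Rmeas K by (simp add: measure_distr)
    also have "\<dots> = measure lebesgue K" using K by (simp add: distrR)
    finally show ?thesis .
  qed
  have nR: "norm (R v) = norm v" for v
  proof -
    have "R v \<bullet> R v = (\<Sum>j\<in>UNIV. v $ Rep_wo j * v $ Rep_wo j)"
      by (simp add: R_def inner_vec_def)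
    also have "\<dots> = (\<Sum>i\<in>UNIV. v $ i * v $ i)"
      using sum.reindex_bij_betw[OF bR, of "\<lambda>i. v $ i * v $ i"] by simp
    also have "\<dots> = v \<bullet> v" by (simp add: inner_vec_def)
    finally show ?thesis by (simp add: norm_eq_sqrt_inner)
  qed
  define g' where "g' = (\<lambda>w. R (g (Ri w)))"
  have og': "orthogonal_transformation g'"
  proof -
    have "linear g'" unfolding g'_def
      using linear_compose[OF linRi linear_compose[OF orthogonal_transformation_linear[OF og] linR]]
      by (simp add: o_def)
    moreover have "norm (g' w) = norm w" for w
      using nR[of "g (Ri w)"] orthogonal_transformation_norm[OF og, of "Ri w"] nR[of "Ri w"]
      by (simp add: g'_def RRi)
    ultimately show ?thesis by (simp add: orthogonal_transformation)
  qed
  have Rbox: "R ` cbox a b = cbox (R a) (R b)"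
  proof
    show "R ` cbox a b \<subseteq> cbox (R a) (R b)"
      by (auto simp: mem_box_cart R_def)
    show "cbox (R a) (R b) \<subseteq> R ` cbox a b"
    proof
      fix w assume w: "w \<in> cbox (R a) (R b)"
      have "Ri w \<in> cbox a b"
        unfolding mem_box_cart
      proof
        fix i
        show "a $ i \<le> Ri w $ i \<and> Ri w $ i \<le> b $ i"
          using w unfolding mem_box_cart
          by (auto simp: R_def Ri_def Abs_wo_inverse dest: spec[of _ "Abs_wo i"])
      qed
      then show "w \<in> R ` cbox a b" by (metis RRi image_eqI)
    qed
  qed
  have gimg: "g ` cbox a b = Ri ` (g' ` cbox (R a) (R b))"
    unfolding Rbox[symmetric] g'_def image_image by (simp add: RiR)
  have Kc: "compact (g' ` cbox (R a) (R b))"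
    by (rule compact_continuous_image[OF _ compact_cbox]) (simp add: linear_continuous_on
        linear_conv_bounded_linear[THEN iffD1] orthogonal_transformation_linear[OF og'])
  then have Kb: "g' ` cbox (R a) (R b) \<in> sets borel"
    by (simp add: borel_compact)
  have "measure lebesgue (g ` cbox a b) = measure lebesgue (g' ` cbox (R a) (R b))"
    unfolding gimg by (rule key[OF Kb])
  also have "\<dots> = measure lebesgue (cbox (R a) (R b))"
    by (rule measure_orthogonal_image[OF og']) simp
  also have "\<dots> = measure lebesgue (Ri ` cbox (R a) (R b))"
    by (rule key[symmetric]) simp
  also have "Ri ` cbox (R a) (R b) = cbox a b"
    unfolding Rbox[symmetric] image_image by (simp add: RiR)
  finally show ?thesis .
qed



lemma orth_fam_transformation:
  fixes \<pi> :: "'a::finite \<Rightarrow> real^'a"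
  assumes orth: "\<And>i j. \<pi> i \<bullet> \<pi> j = (if i = j then 1 else 0)"
  shows "orthogonal_transformation (\<lambda>y::real^'a. \<Sum>i\<in>UNIV. y$i *\<^sub>R \<pi> i)"
proof -
  let ?g = "\<lambda>y::real^'a. \<Sum>i\<in>UNIV. y$i *\<^sub>R \<pi> i"
  have lin: "linear ?g"
    by (rule linearI) (simp_all add: scaleR_add_left sum.distrib scaleR_sum_right)
  have "?g y \<bullet> ?g y = y \<bullet> y" for y
  proof -
    have "?g y \<bullet> ?g y = (\<Sum>i\<in>UNIV. y$i * y$i)"
      by (simp add: inner_sum_left inner_sum_right orth if_distrib cong: if_cong)
    also have "\<dots> = y \<bullet> y" by (simp add: inner_vec_def)
    finally show ?thesis .
  qed
  then have "norm (?g y) = norm y" for y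
    by (simp add: norm_eq_sqrt_inner)
  with lin show ?thesis by (simp add: orthogonal_transformation)
qed

lemma box_measure:
  fixes \<pi> :: "'a::finite \<Rightarrow> real^'a" and S :: "(real^'a) set"
  assumes orth: "\<And>i j. \<pi> i \<bullet> \<pi> j = (if i = j then 1 else 0)"
    and Ssub: "S \<subseteq> cball 0 s" and dpos: "\<delta> \<ge> 0" and spos: "s \<ge> 0"
    and diam: "\<And>i c c'. i \<in> d \<Longrightarrow> c \<in> S \<Longrightarrow> c' \<in> S \<Longrightarrow> (c - c') \<bullet> \<pi> i \<le> \<delta>"
  shows "measure lebesgue S \<le> \<delta> ^ card d * (2 * s) ^ (CARD('a) - card d)"
proof -
  have rhs_nn: "0 \<le> \<delta> ^ card d * (2 * s) ^ (CARD('a) - card d)"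
    using dpos spos by simp
  show ?thesis
  proof (cases "S \<in> sets lebesgue \<and> S \<noteq> {}")
    case False
    then show ?thesis using rhs_nn by (auto simp: measure_notin_sets)
  next
    case True
    then have Smeas: "S \<in> sets lebesgue" and Sne: "S \<noteq> {}" by auto
    define g where "g = (\<lambda>y::real^'a. \<Sum>i\<in>UNIV. y$i *\<^sub>R \<pi> i)"
    have og: "orthogonal_transformation g"
      unfolding g_def by (rule orth_fam_transformation[OF orth])
    have coord: "g y \<bullet> \<pi> j = y $ j" for y j
      by (simp add: g_def inner_sum_left orth if_distrib cong: if_cong)
    have npi: "norm (\<pi> i) = 1" for i
      using orth[of i i] by (simp add: norm_eq_sqrt_inner)
    define m where "m i = Inf ((\<lambda>c. c \<bullet> \<pi> i) ` S)" for i
    define lo where "lo = (\<chi> i. if i \<in> d then m i else - s)"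
    define hi where "hi = (\<chi> i. if i \<in> d then m i + \<delta> else s)"
    have mlow: "m i \<le> c \<bullet> \<pi> i" if "i \<in> d" "c \<in> S" for i c
    proof -
      have "bdd_below ((\<lambda>c. c \<bullet> \<pi> i) ` S)"
        unfolding bdd_below_def
      proof (intro exI ballI)
        fix x assume "x \<in> (\<lambda>c. c \<bullet> \<pi> i) ` S"
        then obtain c' where "c' \<in> S" "x = c' \<bullet> \<pi> i" by auto
        then show "c \<bullet> \<pi> i - \<delta> \<le> x" using diam[OF that(1) that(2) \<open>c' \<in> S\<close>]
          by (simp add: inner_diff_left)
      qed
      then show ?thesis unfolding m_def using that by (auto intro: cInf_lower)
    qed
    have mup: "c \<bullet> \<pi> i \<le> m i + \<delta>" if "i \<in> d" "c \<in> S" for i c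
    proof -
      have "c \<bullet> \<pi> i - \<delta> \<le> m i"
        unfolding m_def
      proof (rule cInf_greatest)
        show "(\<lambda>c. c \<bullet> \<pi> i) ` S \<noteq> {}" using Sne by auto
        fix x assume "x \<in> (\<lambda>c. c \<bullet> \<pi> i) ` S"
        then obtain c' where "c' \<in> S" "x = c' \<bullet> \<pi> i" by auto
        then show "c \<bullet> \<pi> i - \<delta> \<le> x" using diam[OF that(1) that(2) \<open>c' \<in> S\<close>]
          by (simp add: inner_diff_left)
      qed
      then show ?thesis by simp
    qed
    have outside: "\<bar>c \<bullet> \<pi> i\<bar> \<le> s" if "c \<in> S" for i c
    proof -
      have "\<bar>c \<bullet> \<pi> i\<bar> \<le> norm c * norm (\<pi> i)" by (rule Cauchy_Schwarz_ineq2)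
      also have "\<dots> \<le> s" using Ssub that npi by auto
      finally show ?thesis .
    qed
    have Ssub2: "S \<subseteq> g ` cbox lo hi"
    proof
      fix c assume c: "c \<in> S"
      obtain y where y: "c = g y"
        using orthogonal_transformation_surj[OF og] by (metis surj_def)
      have yc: "y $ j = c \<bullet> \<pi> j" for j using coord y by simp
      have "y \<in> cbox lo hi"
        unfolding mem_box_cart lo_def hi_def
        using mlow[OF _ c] mup[OF _ c] outside[OF c] by (auto simp: yc abs_le_iff) (smt (verit) outside[OF c])
      then show "c \<in> g ` cbox lo hi" using y by auto
    qed
    have lohi: "lo $ i \<le> hi $ i" for i
      using dpos spos by (simp add: lo_def hi_def)
    then have ne: "cbox lo hi \<noteq> {}" by (simp add: box_ne_empty(1) cart_eq_inner_axis[symmetric]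
        Basis_vec_def)
    have "measure lebesgue S \<le> measure lebesgue (g ` cbox lo hi)"
    proof (rule measure_mono_fmeasurable[OF Ssub2 Smeas])
      have "compact (g ` cbox lo hi)"
        by (rule compact_continuous_image[OF _ compact_cbox]) (simp add: linear_continuous_on
          linear_conv_bounded_linear[THEN iffD1] orthogonal_transformation_linear[OF og])
      then show "g ` cbox lo hi \<in> fmeasurable lebesgue" by (rule lmeasurable_compact)
    qed
    also have "\<dots> = measure lebesgue (cbox lo hi)"
      by (rule orth_image_cbox_measure[OF og])
    also have "\<dots> = (\<Prod>i\<in>UNIV. hi $ i - lo $ i)"
      using ne content_cbox_cart UNIV_I by fastforce
    also have "\<dots> = (\<Prod>i\<in>UNIV. if i \<in> d then \<delta> else 2 * s)"
      by (rule prod.cong) (auto simp: lo_def hi_def)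
    also have "\<dots> = \<delta> ^ card d * (2 * s) ^ (CARD('a) - card d)"
      by (simp add: prod.If_cases card_Diff_subset Compl_eq_Diff_UNIV)
    finally show ?thesis .
  qed
qed


lemma extend_orthonormal:
  fixes B :: "(real^'a::finite) set"
  assumes finB: "finite B" and pB: "pairwise orthogonal B" and nB: "\<forall>v\<in>B. norm v = 1"
  obtains \<pi> :: "'a \<Rightarrow> real^'a" and d where "card d = card B" "\<forall>i\<in>d. \<pi> i \<in> B"
    "\<And>i j. \<pi> i \<bullet> \<pi> j = (if i = j then 1 else 0)"
proof -
  define W where "W = span B"
  have "0 \<notin> B" using nB by auto
  then have indB: "independent B" using pB by (simp add: pairwise_orthogonal_independent)
  have dimW: "dim W = card B" unfolding W_def by (rule dim_span_eq_card_independent[OF indB])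
  have sW: "subspace W" unfolding W_def by simp
  define W' where "W' = orthogonal_comp W"
  have sW': "subspace W'" unfolding W'_def by (rule subspace_orthogonal_comp)
  have "dim {y \<in> UNIV. \<forall>x \<in> W. orthogonal x y} + dim W = dim (UNIV :: (real^'a) set)"
    by (rule dim_subspace_orthogonal_to_vectors) (simp_all add: sW)
  then have dimW': "dim W' + card B = CARD('a)"
    by (simp add: W'_def orthogonal_comp_def dimW dim_UNIV)
  obtain C where CW': "C \<subseteq> W'" and pC: "pairwise orthogonal C" and nC: "\<And>x. x \<in> C \<Longrightarrow> norm x = 1"
    and indC: "independent C" and cardC: "card C = dim W'"
    using orthonormal_basis_subspace[OF sW'] by metis
  have finC: "finite C" using indC by (simp add: independent_bound)
  have BW: "B \<subseteq> W" unfolding W_def by (rule span_superset)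
  have BCorth: "v \<bullet> w = 0" if "v \<in> B" "w \<in> C" for v w
    using that BW CW' by (auto simp: W'_def orthogonal_comp_def orthogonal_def)
  have BCdisj: "B \<inter> C = {}"
  proof (rule ccontr)
    assume "B \<inter> C \<noteq> {}"
    then obtain v where "v \<in> B" "v \<in> C" by auto
    then have "v \<bullet> v = 0" using BCorth by blast
    then show False using nC[OF \<open>v \<in> C\<close>] by simp
  qed
  have "card B \<le> card (UNIV :: 'a set)" using dimW' by simp
  then obtain d where dsub: "d \<subseteq> (UNIV :: 'a set)" and cd: "card d = card B" and fd: "finite d"
    by (rule obtain_subset_with_card_n)
  obtain \<pi>1 where b1: "bij_betw \<pi>1 d B" using finite_same_card_bij[OF fd finB cd] by blast
  have "card (- d) = card C"
    using dimW' cd cardC by (simp add: Compl_eq_Diff_UNIV card_Diff_subset fd)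
  moreover have "finite (- d)" by simp
  ultimately obtain \<pi>2 where b2: "bij_betw \<pi>2 (- d) C" using finite_same_card_bij[OF _ finC] by metis
  define \<pi> where "\<pi> i = (if i \<in> d then \<pi>1 i else \<pi>2 i)" for i
  have \<pi>BC: "\<pi> i \<in> B \<union> C" for i
    using b1 b2 by (auto simp: \<pi>_def bij_betw_def)
  have \<pi>inj: "\<pi> i \<noteq> \<pi> j" if "i \<noteq> j" for i j
  proof -
    have "\<pi>1 i \<noteq> \<pi>1 j" if "i \<in> d" "j \<in> d" using b1 that \<open>i \<noteq> j\<close> by (auto simp: bij_betw_def inj_on_def)
    moreover have "\<pi>2 i \<noteq> \<pi>2 j" if "i \<notin> d" "j \<notin> d" using b2 that \<open>i \<noteq> j\<close> by (auto simp: bij_betw_def inj_on_def)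
    moreover have "\<pi>1 i \<noteq> \<pi>2 j" if "i \<in> d" "j \<notin> d"
      using b1 b2 that BCdisj by (auto simp: bij_betw_def)
    moreover have "\<pi>2 i \<noteq> \<pi>1 j" if "i \<notin> d" "j \<in> d"
      using b1 b2 that BCdisj by (auto simp: bij_betw_def)
    ultimately show ?thesis by (auto simp: \<pi>_def)
  qed
  have orth: "\<pi> i \<bullet> \<pi> j = (if i = j then 1 else 0)" for i j
  proof (cases "i = j")
    case True
    have "norm (\<pi> i) = 1" using \<pi>BC[of i] nB nC by auto
    then show ?thesis using True by (simp add: norm_eq_1)
  next
    case False
    then have ne: "\<pi> i \<noteq> \<pi> j" by (rule \<pi>inj)
    have "\<pi> i \<bullet> \<pi> j = 0"
    proof -
      consider "\<pi> i \<in> B" "\<pi> j \<in> B" | "\<pi> i \<in> C" "\<pi> j \<in> C" | "\<pi> i \<in> B" "\<pi> j \<in> C" | "\<pi> i \<in> C" "\<pi> j \<in> B"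
        using \<pi>BC[of i] \<pi>BC[of j] by blast
      then show ?thesis
      proof cases
        case 1 then show ?thesis using pB ne unfolding pairwise_def orthogonal_def by blast
      next
        case 2 then show ?thesis using pC ne unfolding pairwise_def orthogonal_def by blast
      next
        case 3 then show ?thesis using BCorth by blast
      next
        case 4 then show ?thesis using BCorth[of "\<pi> j" "\<pi> i"] by (simp add: inner_commute)
      qed
    qed
    then show ?thesis using False by simp
  qed
  have "\<forall>i\<in>d. \<pi> i \<in> B" using b1 by (auto simp: \<pi>_def bij_betw_def)
  then show ?thesis using that cd orth by blast
qed


lemma count_prefix_filter:
  assumes "r \<le> length xs" "\<forall>i<r. P (xs ! i)"
  shows "r \<le> length (filter P xs)"
proof -
  have "\<forall>x\<in>set (take r xs). P x"
    using assms by (auto simp: in_set_conv_nth)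
  then have "filter P (take r xs) = take r xs" by simp
  then have "length (filter P (take r xs)) = r" using assms(1) by simp
  moreover have "length (filter P xs) = length (filter P (take r xs)) + length (filter P (drop r xs))"
    by (metis append_take_drop_id filter_append length_append)
  ultimately show ?thesis by simp
qed

lemma length_filter_concat_replicate:
  "length (filter P (concat (map (\<lambda>e. replicate (n e) (f e)) es)))
     = sum_list (map (\<lambda>e. if P (f e) then n e else 0) es)"
  by (induction es) auto

lemma length_filter_rev_sort:
  "length (filter P (rev (sort xs))) = length (filter P xs)"
  by (metis mset_filter mset_rev mset_sort size_mset)

lemma Mform:
  fixes A :: "real^'a^'b"
  shows "((transpose A ** A) *v x) \<bullet> y = (A *v x) \<bullet> (A *v y)"
  by (simp add: matrix_vector_mul_assoc[symmetric] transpose_matrix_vector dot_lmul_matrix)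

lemma eigen_family:
  fixes A :: "real^'a::finite^'b::finite"
  assumes sv: "largest_singular_values_ge r \<sigma> A" and sp: "\<sigma> > 0" and rp: "r > 0"
  obtains B :: "(real^'a) set" where "finite B" "pairwise orthogonal B" "\<forall>v\<in>B. norm v = 1"
    "r \<le> card B" "\<forall>v\<in>B. \<forall>x. \<bar>x \<bullet> v\<bar> \<le> norm (A *v x) / \<sigma>"
proof -
  define M where "M = transpose A ** A"
  define Ev where "Ev = {e. \<exists>v. v \<noteq> 0 \<and> M *v v = e *\<^sub>R v}"
  define E where "E e = {v. M *v v = e *\<^sub>R v}" for e
  have svdef: "singular_values A = rev (sort (concat (map (\<lambda>e. replicate (dim (E e)) (sqrt e))
        (sorted_list_of_set Ev))))"
    unfolding singular_values_def Let_def M_def[symmetric] Ev_def E_def ..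
  have "r \<le> length (filter (\<lambda>x. \<sigma> \<le> x) (singular_values A))"
    using sv unfolding largest_singular_values_ge_def by (intro count_prefix_filter) auto
  also have "\<dots> = sum_list (map (\<lambda>e. if \<sigma> \<le> sqrt e then dim (E e) else 0) (sorted_list_of_set Ev))"
    unfolding svdef length_filter_rev_sort length_filter_concat_replicate ..
  finally have rle: "r \<le> sum_list (map (\<lambda>e. if \<sigma> \<le> sqrt e then dim (E e) else 0) (sorted_list_of_set Ev))" .
  have finEv: "finite Ev"
  proof (rule ccontr)
    assume "infinite Ev"
    then have "sorted_list_of_set Ev = []" by simp
    then show False using rle rp by simp
  qed
  define F where "F = {e\<in>Ev. \<sigma> \<le> sqrt e}"
  have finF: "finite F" using finEv by (simp add: F_def)
  have "sum_list (map (\<lambda>e. if \<sigma> \<le> sqrt e then dim (E e) else 0) (sorted_list_of_set Ev))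
      = (\<Sum>e\<in>Ev. if \<sigma> \<le> sqrt e then dim (E e) else 0)"
    using finEv by (simp add: sum_list_distinct_conv_sum_set)
  also have "\<dots> = (\<Sum>e\<in>F. dim (E e))"
    using finEv by (simp add: F_def sum.inter_filter[symmetric])
  finally have rleF: "r \<le> (\<Sum>e\<in>F. dim (E e))" using rle by simp
  have subE: "subspace (E e)" for e
    unfolding subspace_def E_def
    by (simp add: matrix_vector_right_distrib scaleR_add_right matrix_vector_mult_scaleR)
  have "\<forall>e. \<exists>Bs. Bs \<subseteq> E e \<and> pairwise orthogonal Bs \<and> (\<forall>x\<in>Bs. norm x = 1) \<and> independent Bs
        \<and> card Bs = dim (E e)"
    by (metis orthonormal_basis_subspace[OF subE])
  then obtain Bf where Bf: "\<And>e. Bf e \<subseteq> E e" "\<And>e. pairwise orthogonal (Bf e)"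
    "\<And>e. \<forall>x\<in>Bf e. norm x = 1" "\<And>e. independent (Bf e)" "\<And>e. card (Bf e) = dim (E e)"
    by metis
  have finBf: "finite (Bf e)" for e using Bf(4) by (simp add: independent_bound)
  have eig_orth: "v \<bullet> w = 0" if "v \<in> E e" "w \<in> E e'" "e \<noteq> e'" for v w e e'
  proof -
    have "e * (v \<bullet> w) = (M *v v) \<bullet> w" using that by (simp add: E_def)
    also have "\<dots> = (A *v v) \<bullet> (A *v w)" unfolding M_def by (rule Mform)
    also have "\<dots> = (M *v w) \<bullet> v" unfolding M_def using Mform[of A w v] inner_commute by metis
    also have "\<dots> = e' * (v \<bullet> w)" using that by (simp add: E_def inner_commute)
    finally show ?thesis using that(3) by simp
  qed
  define B where "B = (\<Union>e\<in>F. Bf e)"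
  have disj: "Bf e \<inter> Bf e' = {}" if "e \<noteq> e'" for e e'
  proof (rule ccontr)
    assume "Bf e \<inter> Bf e' \<noteq> {}"
    then obtain v where v: "v \<in> Bf e" "v \<in> Bf e'" by auto
    then have "v \<bullet> v = 0" using eig_orth[of v e v e'] Bf(1) that by blast
    then show False using Bf(3)[of e] v by force
  qed
  have finB: "finite B" using finF finBf by (simp add: B_def)
  have "card B = (\<Sum>e\<in>F. card (Bf e))"
    unfolding B_def using finF finBf disj by (intro card_UN_disjoint) auto
  then have rB: "r \<le> card B" using rleF Bf(5) by simp
  have pBo: "pairwise orthogonal B"
    unfolding pairwise_def
  proof (intro ballI impI)
    fix v w assume v: "v \<in> B" and w: "w \<in> B" and ne: "v \<noteq> w"
    from v obtain e where e: "e \<in> F" "v \<in> Bf e" by (auto simp: B_def)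
    from w obtain e' where e': "e' \<in> F" "w \<in> Bf e'" by (auto simp: B_def)
    show "orthogonal v w"
    proof (cases "e = e'")
      case True then show ?thesis using Bf(2)[of e] e e' ne by (auto simp: pairwise_def)
    next
      case False then show ?thesis using eig_orth[of v e w e'] Bf(1) e e' by (auto simp: orthogonal_def)
    qed
  qed
  have nBo: "\<forall>v\<in>B. norm v = 1" using Bf(3) by (auto simp: B_def)
  have bnd: "\<forall>v\<in>B. \<forall>x. \<bar>x \<bullet> v\<bar> \<le> norm (A *v x) / \<sigma>"
  proof (intro ballI allI)
    fix v x assume v: "v \<in> B"
    from v obtain e where e: "e \<in> F" "v \<in> Bf e" by (auto simp: B_def)
    have ve: "M *v v = e *\<^sub>R v" using Bf(1) e by (auto simp: E_def)
    have nv: "norm v = 1" using nBo v by auto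
    have se: "\<sigma> \<le> sqrt e" using e by (simp add: F_def)
    then have epos: "e > 0" using sp by (metis not_less order.strict_trans1 real_sqrt_le_0_iff)
    have "(A *v v) \<bullet> (A *v v) = e"
      using Mform[of A v v] ve nv by (simp add: M_def[symmetric] norm_eq_1)
    then have nAv: "norm (A *v v) = sqrt e" by (simp add: norm_eq_sqrt_inner)
    have "e * (x \<bullet> v) = (A *v v) \<bullet> (A *v x)"
      using Mform[of A v x] ve by (simp add: M_def[symmetric] inner_commute)
    then have "e * \<bar>x \<bullet> v\<bar> \<le> sqrt e * norm (A *v x)"
      using Cauchy_Schwarz_ineq2[of "A *v v" "A *v x"] nAv epos by (simp add: abs_mult)
    moreover have "sqrt e * sqrt e = e" using epos by simp
    ultimately have "sqrt e * \<bar>x \<bullet> v\<bar> \<le> norm (A *v x)"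
      using epos by (smt (verit, best) mult.assoc mult_le_cancel_left_pos real_sqrt_gt_0_iff)
    then have "\<sigma> * \<bar>x \<bullet> v\<bar> \<le> norm (A *v x)"
      by (meson abs_ge_zero dual_order.trans mult_right_mono se)
    then show "\<bar>x \<bullet> v\<bar> \<le> norm (A *v x) / \<sigma>" using sp by (simp add: field_simps)
  qed
  show ?thesis using that finB pBo nBo rB bnd by blast
qed


lemma pow_le_fact_sq: "n ^ n \<le> (fact n :: nat)^2"
proof -
  have f: "(fact n :: nat) = (\<Prod>k=1..n. k)" by (simp add: fact_prod)
  have f2: "(\<Prod>k=1..n. k) = (\<Prod>k=1..n. n + 1 - k)"
    by (rule prod.atLeastAtMost_rev[of "\<lambda>k. k" 1 n])
  have "(fact n :: nat)^2 = (\<Prod>k=1..n. k) * (\<Prod>k=1..n. k)"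
    by (simp only: power2_eq_square f)
  also have "\<dots> = (\<Prod>k=1..n. k) * (\<Prod>k=1..n. n + 1 - k)"
    using f2 by (rule arg_cong)
  also have "\<dots> = (\<Prod>k=1..n. k * (n + 1 - k))" by (simp add: prod.distrib)
  finally have eq: "(fact n :: nat)^2 = (\<Prod>k=1..n. k * (n + 1 - k))" .
  have "(\<Prod>k=1..n. n) \<le> (\<Prod>k=1..n. k * (n + 1 - k))"
  proof (rule prod_mono)
    fix k assume k: "k \<in> {1..n}"
    obtain a b where ka: "k = a + 1" and nb: "n = a + b + 1"
    proof
      show "k = (k - 1) + 1" using k by simp
      show "n = (k - 1) + (n - k) + 1" using k by simp
    qed
    have e1: "n + 1 - k = b + 1" using ka nb by simp
    have e2: "a + b + 1 \<le> (a + 1) * (b + 1)" by (simp add: algebra_simps)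
    show "0 \<le> n \<and> n \<le> k * (n + 1 - k)" using e2 by (simp only: e1 ka nb) simp
  qed
  then show ?thesis by (simp add: eq)
qed

lemma sqrt_pow_le_fact: "sqrt (real n) ^ n \<le> fact n"
proof -
  have "real (n ^ n) \<le> real ((fact n :: nat)^2)" using pow_le_fact_sq[of n] of_nat_le_iff by blast
  then have "real n ^ n \<le> (fact n)^2" by (simp add: of_nat_fact)
  then have "sqrt (real n ^ n) \<le> sqrt ((fact n)^2)" by (rule real_sqrt_le_mono)
  then show ?thesis by (simp add: real_sqrt_power)
qed

lemma ball_lower:
  assumes sp: "s > 0"
  shows "(2 * s / sqrt (real CARD('a::finite))) ^ CARD('a) \<le> measure lebesgue (cball (0::real^'a) s)"
proof -
  define D where "D = real CARD('a)"
  have Dp: "D > 0" by (simp add: D_def)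
  define t where "t = s / sqrt D"
  have tp: "t > 0" using sp Dp by (simp add: t_def)
  define T where "T = (\<chi> i::'a. t)"
  have sub: "cbox (- T) T \<subseteq> cball 0 s"
  proof
    fix y :: "real^'a" assume y: "y \<in> cbox (- T) T"
    have yi: "\<bar>y $ i\<bar> \<le> t" for i
    proof -
      have "- t \<le> y $ i \<and> y $ i \<le> t" using y by (simp add: mem_box_cart T_def)
      then show ?thesis by linarith
    qed
    have "y \<bullet> y = (\<Sum>i\<in>UNIV. y $ i * y $ i)" by (simp add: inner_vec_def)
    also have "\<dots> \<le> (\<Sum>i\<in>(UNIV::'a set). t * t)"
    proof (rule sum_mono)
      fix i :: 'a
      have "\<bar>y $ i\<bar> * \<bar>y $ i\<bar> \<le> t * t"
        by (rule mult_mono[OF yi[of i] yi[of i]]) (use tp in auto)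
      then show "y $ i * y $ i \<le> t * t" by (simp only: abs_mult_self_eq)
    qed
    also have "\<dots> = D * (t * t)" by (simp add: D_def)
    also have "\<dots> = s * s" using Dp by (simp add: t_def)
    finally have "y \<bullet> y \<le> s * s" .
    then have "sqrt (y \<bullet> y) \<le> sqrt (s * s)" by (rule real_sqrt_le_mono)
    then have "norm y \<le> s" using sp by (simp add: norm_eq_sqrt_inner)
    then show "y \<in> cball 0 s" by simp
  qed
  have ne: "cbox (- T) T \<noteq> {}" using tp by (auto simp: T_def box_ne_empty(1) Basis_vec_def inner_axis)
  have "measure lebesgue (cbox (- T) T) = (\<Prod>i\<in>UNIV. T $ i - (- T) $ i)"
    using ne content_cbox_cart UNIV_I by fastforce
  also have "\<dots> = (2 * t) ^ CARD('a)" by (simp add: T_def)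
  finally have "measure lebesgue (cbox (- T) T) = (2 * s / sqrt D) ^ CARD('a)" by (simp add: t_def)
  moreover have "measure lebesgue (cbox (- T) T) \<le> measure lebesgue (cball (0::real^'a) s)"
    by (rule measure_mono_fmeasurable[OF sub]) auto
  ultimately show ?thesis by (simp add: D_def)
qed


theorem lemma2:
  fixes g :: "real^'a \<Rightarrow> real^'b" and g0 :: "real^'b" and A :: "real^'a^'b"
    and a L \<sigma> \<epsilon> :: real and r :: nat
  assumes C2: "\<exists>g' :: real^'a \<Rightarrow> ((real^'a) \<Rightarrow>\<^sub>L (real^'b)).
               \<exists>g'' :: real^'a \<Rightarrow> ((real^'a) \<Rightarrow>\<^sub>L ((real^'a) \<Rightarrow>\<^sub>L (real^'b))).
      (\<forall>c\<in>cball 0 a. (g has_derivative blinfun_apply (g' c)) (at c within cball 0 a)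
                    \<and> (g' has_derivative blinfun_apply (g'' c)) (at c within cball 0 a))
      \<and> continuous_on (cball 0 a) g''"
    and h_bound: "\<forall>c. norm c \<le> a \<longrightarrow> norm (g c - g0 - A *v c) \<le> L * (norm c)^2"
    and L_pos: "L > 0"
    and sigma_pos: "\<sigma> > 0"
    and sv: "largest_singular_values_ge r \<sigma> A"
    and eps_pos: "\<epsilon> > 0"
    and eps_le: "sqrt \<epsilon> \<le> a"
  shows "measure lebesgue ({c. norm (g c) \<le> L * \<epsilon>} \<inter> cball 0 (sqrt \<epsilon>))
           / measure lebesgue (cball (0::real^'a) (sqrt \<epsilon>))
         \<le> fact CARD('a) * 2 ^ r * L ^ r * \<epsilon> powr (real r / 2) / \<sigma> ^ r"
proof -
  define s where "s = sqrt \<epsilon>"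
  have sp: "s > 0" using eps_pos by (simp add: s_def)
  have ss: "s * s = \<epsilon>" using eps_pos by (simp add: s_def)
  define D where "D = CARD('a)"
  define S where "S = {c. norm (g c) \<le> L * \<epsilon>} \<inter> cball (0::real^'a) s"
  define x where "x = 2 * L * s / \<sigma>"
  have xp: "x > 0" using L_pos sp sigma_pos by (simp add: x_def)
  have rhs: "fact CARD('a) * 2 ^ r * L ^ r * \<epsilon> powr (real r / 2) / \<sigma> ^ r = fact D * x ^ r"
  proof -
    have "\<epsilon> powr (real r / 2) = s ^ r"
      using eps_pos by (simp add: s_def powr_half_sqrt[symmetric] powr_power)
    then show ?thesis by (simp add: x_def D_def power_mult_distrib power_divide)
  qed
  define Q where "Q = (2 * s / sqrt (real D)) ^ D"
  have Qp: "Q > 0" using sp by (simp add: Q_def D_def)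
  have mb: "Q \<le> measure lebesgue (cball (0::real^'a) s)"
    unfolding Q_def D_def by (rule ball_lower[OF sp])
  have mbp: "measure lebesgue (cball (0::real^'a) s) > 0" using Qp mb by linarith
  have mS_ball: "measure lebesgue S \<le> measure lebesgue (cball (0::real^'a) s)"
  proof (cases "S \<in> sets lebesgue")
    case True
    show ?thesis by (rule measure_mono_fmeasurable[OF _ True]) (auto simp: S_def)
  next
    case False
    then show ?thesis by (simp add: measure_notin_sets)
  qed
  have ratio1: "measure lebesgue S / measure lebesgue (cball (0::real^'a) s) \<le> 1"
    using mS_ball mbp by simp
  have fact1: "1 \<le> (fact D :: real)" by simp
  have goal: "measure lebesgue S / measure lebesgue (cball (0::real^'a) s) \<le> fact D * x ^ r"
  proof (cases "r = 0 \<or> 1 \<le> x")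
    case True
    then have "1 \<le> x ^ r" by (auto simp: one_le_power)
    then have "1 \<le> fact D * x ^ r" using fact1
      by (metis mult_mono' mult.right_neutral zero_le_one)
    then show ?thesis using ratio1 by linarith
  next
    case False
    then have rp: "r > 0" and x1: "x < 1" by auto
    obtain B where finB: "finite B" and pB: "pairwise orthogonal B" and nB: "\<forall>v\<in>B. norm v = 1"
      and rB: "r \<le> card B" and bB: "\<forall>v\<in>B. \<forall>y. \<bar>y \<bullet> v\<bar> \<le> norm (A *v y) / \<sigma>"
      using eigen_family[OF sv sigma_pos rp] by metis
    obtain \<pi> :: "'a \<Rightarrow> real^'a" and d where cd: "card d = card B" and dB: "\<forall>i\<in>d. \<pi> i \<in> B"
      and orth: "\<And>i j. \<pi> i \<bullet> \<pi> j = (if i = j then 1 else 0)"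
      using extend_orthonormal[OF finB pB nB] by metis
    define k where "k = card d"
    have kD: "k \<le> D" unfolding k_def D_def by (rule card_mono) auto
    define \<delta> where "\<delta> = 4 * L * \<epsilon> / \<sigma>"
    have dp: "\<delta> \<ge> 0" using L_pos eps_pos sigma_pos by (simp add: \<delta>_def)
    have near: "norm (g0 + A *v c) \<le> 2 * L * \<epsilon>" if c: "c \<in> S" for c
    proof -
      have nc: "norm c \<le> s" using c by (simp add: S_def)
      then have "norm c \<le> a" using eps_le by (simp add: s_def)
      then have "norm (g c - g0 - A *v c) \<le> L * (norm c)^2" using h_bound by blast
      also have "\<dots> \<le> L * \<epsilon>"
      proof -
        have "(norm c)^2 \<le> s^2" using nc by (simp add: power_mono)
        then show ?thesis using L_pos ss by (simp add: power2_eq_square)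
      qed
      finally have h1: "norm (g c - g0 - A *v c) \<le> L * \<epsilon>" .
      have h2: "norm (g c) \<le> L * \<epsilon>" using c by (simp add: S_def)
      have "g0 + A *v c = g c - (g c - g0 - A *v c)" by simp
      then have "norm (g0 + A *v c) \<le> norm (g c) + norm (g c - g0 - A *v c)"
        by (metis norm_triangle_ineq4)
      then show ?thesis using h1 h2 by linarith
    qed
    have diam: "(c - c') \<bullet> \<pi> i \<le> \<delta>" if "i \<in> d" "c \<in> S" "c' \<in> S" for i c c'
    proof -
      have "A *v (c - c') = (g0 + A *v c) - (g0 + A *v c')"
        by (simp add: matrix_vector_mult_diff_distrib)
      then have "norm (A *v (c - c')) \<le> norm (g0 + A *v c) + norm (g0 + A *v c')"
        by (metis norm_triangle_ineq4)
      then have nA: "norm (A *v (c - c')) \<le> 4 * L * \<epsilon>" using near[OF that(2)] near[OF that(3)] by linarith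
      have "(c - c') \<bullet> \<pi> i \<le> \<bar>(c - c') \<bullet> \<pi> i\<bar>" by simp
      also have "\<dots> \<le> norm (A *v (c - c')) / \<sigma>" using bB dB that(1) by blast
      also have "\<dots> \<le> \<delta>" unfolding \<delta>_def using nA sigma_pos by (simp add: divide_right_mono)
      finally show ?thesis .
    qed
    have mS: "measure lebesgue S \<le> \<delta> ^ k * (2 * s) ^ (D - k)"
      unfolding k_def D_def
      by (rule box_measure[OF orth _ dp sp[THEN less_imp_le] diam]) (auto simp: S_def)
    have "measure lebesgue S / measure lebesgue (cball (0::real^'a) s) \<le> \<delta> ^ k * (2 * s) ^ (D - k) / Q"
      using mS mb Qp by (meson frac_le dp sp zero_le_mult_iff zero_le_power measure_nonneg
          less_imp_le order_trans mult_nonneg_nonneg)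
    also have "\<delta> ^ k * (2 * s) ^ (D - k) / Q = sqrt (real D) ^ D * x ^ k"
    proof -
      have Dk: "(2 * s) ^ D = (2 * s) ^ k * (2 * s) ^ (D - k)"
        using kD by (metis le_add_diff_inverse power_add)
      have Qe: "Q = (2 * s) ^ D / sqrt (real D) ^ D" by (simp add: Q_def power_divide)
      have dx: "\<delta> = x * (2 * s)"
        using sigma_pos by (simp add: \<delta>_def x_def ss[symmetric] field_simps)
      have sD: "sqrt (real D) ^ D > 0" by (simp add: D_def)
      have s2: "(2 * s) ^ k > 0" "(2 * s) ^ (D - k) > 0" using sp by simp_all
      show ?thesis
        unfolding Qe dx Dk using sD s2 sp by (simp add: power_mult_distrib field_simps)
    qed
    also have "\<dots> \<le> fact D * x ^ r"
    proof (rule mult_mono)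
      show "sqrt (real D) ^ D \<le> fact D" by (rule sqrt_pow_le_fact)
      show "x ^ k \<le> x ^ r" using rB cd xp x1 by (intro power_decreasing) (auto simp: k_def)
    qed (use xp in auto)
    finally show ?thesis .
  qed
  show ?thesis using goal unfolding rhs S_def s_def .
qed


end
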